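(* Let $\Omega_1\subseteq\mathbb C$ be path-connected and $\Omega_2\subseteq\mathbb C$ bounded. If $T:\mathbb C_n[z]\to\mathbb C[z]$ is a linear operator mapping every polynomial of degree exactly $n$ in $\pi_n(\Omega_1)$ into $\pi(\Omega_2)$ (in particular never to $0$), then all polynomials $T(f)$, with $f$ of degree exactly $n$ in $\pi_n(\Omega_1)$, have the same degree.
   Context: For $\Omega\subseteq\mathbb C$, $\pi(\Omega)$ is the set of non-zero univariate complex polynomials all of whose zeros lie in $\Omega$ (non-zero constants included), and $\pi_n(\Omega)$ its subset of polynomials of degree at most $n$. *)

theory Defs
  imports "HOL-Analysis.Analysis" "HOL-Computational_Algebra.Polynomial"
begin

definition poly_pi :: "complex set \<Rightarrow> complex poly set" where
  "poly_pi \<Omega> = {p. p \<noteq> 0 \<and> (\<forall>z. poly p z = 0 \<longrightarrow> z \<in> \<Omega>)}"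

definition poly_pi_n :: "nat \<Rightarrow> complex set \<Rightarrow> complex poly set" where
  "poly_pi_n n \<Omega> = {p \<in> poly_pi \<Omega>. degree p \<le> n}"

definition linear_on_Cn :: "nat \<Rightarrow> (complex poly \<Rightarrow> complex poly) \<Rightarrow> bool" where
  "linear_on_Cn n T \<longleftrightarrow>
     (\<forall>p q. degree p \<le> n \<longrightarrow> degree q \<le> n \<longrightarrow> T (p + q) = T p + T q) \<and>
     (\<forall>c p. degree p \<le> n \<longrightarrow> T (smult c p) = smult c (T p))"

end

theory Submission imports Defs "HOL-Computational_Algebra.Fundamental_Theorem_Algebra" begin

lemma coeff_bound:
  fixes as :: "complex list"
  assumes "\<forall>a\<in>set as. norm a \<le> R" "0 \<le> R"
  shows "norm (coeff (\<Prod>a\<leftarrow>as. [:-a,1:]) k) \<le> (1+R)^length as"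
  using assms(1)
proof (induction as arbitrary: k)
  case Nil
  then show ?case by (cases k) auto
next
  case (Cons a as)
  let ?p = "(\<Prod>a\<leftarrow>as. [:-a,1:])"
  have eq: "(\<Prod>a\<leftarrow>a#as. [:-a,1:]) = smult (-a) ?p + pCons 0 ?p"
    by (simp add: mult_pCons_left)
  have h1: "norm (coeff (smult (-a) ?p) k) \<le> R * (1+R)^length as"
    using Cons by (simp add: norm_mult mult_mono')
  have h2: "norm (coeff (pCons 0 ?p) k) \<le> (1+R)^length as"
    using Cons assms(2) by (cases k) auto
  have "norm (coeff (\<Prod>a\<leftarrow>a#as. [:-a,1:]) k) \<le> norm (coeff (smult (-a) ?p) k) + norm (coeff (pCons 0 ?p) k)"
    unfolding eq coeff_add by (rule norm_triangle_ineq)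
  also have "\<dots> \<le> R * (1+R)^length as + (1+R)^length as" using h1 h2 by linarith
  also have "\<dots> = (1+R)^length (a#as)" by (simp add: algebra_simps)
  finally show ?case .
qed

lemma coeff_bound_poly:
  fixes q :: "complex poly"
  assumes "q \<noteq> 0" "\<forall>z. poly q z = 0 \<longrightarrow> norm z \<le> R" "0 \<le> R"
  shows "norm (coeff q k) \<le> norm (lead_coeff q) * (1+R)^degree q"
proof -
  obtain xs where xs: "mset xs = proots q" using ex_mset by blast
  have q: "q = smult (lead_coeff q) (\<Prod>a\<leftarrow>xs. [:-a,1:])"
    using complex_poly_decompose_multiset[of q] xs
    by (metis prod_mset_prod_list mset_map)
  have len: "length xs = degree q" using xs size_proots_complex[of q]
    by (metis size_mset)
  have "\<forall>a\<in>set xs. norm a \<le> R" using xs assms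
    by (metis set_mset_mset set_count_proots mem_Collect_eq)
  then have "norm (coeff (\<Prod>a\<leftarrow>xs. [:-a,1:]) k) \<le> (1+R)^degree q"
    using coeff_bound assms(3) len by metis
  then show ?thesis
    by (subst q) (simp add: norm_mult mult_left_mono)
qed

lemma keyK:
  fixes A B :: "complex poly" and S \<Omega>2 :: "complex set"
  assumes pi: "\<forall>w\<in>S. A - smult w B \<in> poly_pi \<Omega>2" and bnd: "bounded \<Omega>2"
    and perf: "\<forall>a\<in>S. \<forall>e>0. \<exists>w\<in>S. w \<noteq> a \<and> norm (w - a) < e"
    and aS: "a \<in> S"
  shows "degree (A - smult a B) = max (degree A) (degree B)"
proof (rule ccontr)
  define m where "m = max (degree A) (degree B)"
  define P where "P w = A - smult w B" for w
  obtain R where R: "R > 0" "\<forall>z\<in>\<Omega>2. norm z \<le> R" using bnd bounded_pos by blast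
  have le: "degree (P w) \<le> m" for w
    unfolding P_def m_def
    by (metis degree_diff_le degree_smult_le le_trans max.cobounded1 max.cobounded2 max.commute)
  assume "degree (A - smult a B) \<noteq> max (degree A) (degree B)"
  then have km: "degree (P a) < m" using le[of a] unfolding P_def m_def by auto
  define k where "k = degree (P a)"
  have Pa0: "P a \<noteq> 0" using pi aS unfolding P_def poly_pi_def by auto
  define c where "c = coeff (P a) k"
  have c0: "c \<noteq> 0" using Pa0 unfolding c_def k_def by simp
  have cm: "coeff (P a) m = 0" using km by (simp add: coeff_eq_0)
  then have cmA: "coeff A m = a * coeff B m" unfolding P_def by simp
  define \<beta> where "\<beta> = coeff B m"
  have b0: "\<beta> \<noteq> 0"
  proof
    assume "\<beta> = 0"
    then have "coeff A m = 0" "coeff B m = 0" using cmA \<beta>_def by auto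
    moreover have "m = degree A \<or> m = degree B" unfolding m_def by auto
    ultimately have "m = 0"
      by (metis degree_0 leading_coeff_0_iff)
    then show False using km by simp
  qed
  define \<delta> where "\<delta> = coeff B k"
  define K where "K = (1+R)^m"
  define X where "X = norm \<beta> * K + norm \<delta>"
  have X0: "X \<ge> 0" unfolding X_def K_def using R by simp
  define e where "e = norm c / (X + 1)"
  have e0: "e > 0" unfolding e_def using c0 X0 by simp
  obtain w where w: "w \<in> S" "w \<noteq> a" "norm (w - a) < e" using perf aS e0 by blast
  have cPm: "coeff (P w) m = (a - w) * \<beta>" unfolding P_def \<beta>_def using cmA
    by (simp add: algebra_simps)
  have "coeff (P w) m \<noteq> 0" using cPm b0 w(2) by simp
  then have dPw: "degree (P w) = m" using le[of w] by (simp add: le_degree le_antisym)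
  have Pw: "P w \<noteq> 0" "\<forall>z. poly (P w) z = 0 \<longrightarrow> norm z \<le> R"
    using pi w(1) R(2) unfolding P_def poly_pi_def by auto
  have bound: "norm (coeff (P w) k) \<le> norm ((a - w) * \<beta>) * K"
    using coeff_bound_poly[OF Pw, of k] R(1) dPw cPm unfolding K_def by simp
  have cPk: "coeff (P w) k = c + (a - w) * \<delta>"
    unfolding P_def c_def \<delta>_def by (simp add: algebra_simps)
  have "norm c \<le> norm (coeff (P w) k) + norm ((a - w) * \<delta>)"
    using cPk by (metis add_diff_cancel_right' norm_triangle_ineq4)
  also have "\<dots> \<le> norm (a - w) * X"
    using bound unfolding X_def by (simp add: norm_mult distrib_left mult.commute mult.left_commute)
  also have "\<dots> \<le> norm (a - w) * (X + 1)" by (simp add: mult_left_mono)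
  also have "\<dots> < e * (X + 1)" using w(3) X0 by (simp add: norm_minus_commute)
  also have "\<dots> = norm c" unfolding e_def using X0 by simp
  finally show False by simp
qed

lemma degree_F: "degree (\<Prod>a\<leftarrow>xs. [:-a,1::complex:]) = length xs"
proof (induction xs)
  case Nil then show ?case by simp
next
  case (Cons a xs)
  have "(\<Prod>a\<leftarrow>a#xs. [:-a,1::complex:]) = [:-a,1:] * (\<Prod>a\<leftarrow>xs. [:-a,1::complex:])" by simp
  also have "degree \<dots> = 1 + degree (\<Prod>a\<leftarrow>xs. [:-a,1::complex:])"
    by (subst degree_mult_eq) (auto simp: prod_list_zero_iff)
  finally show ?case using Cons by simp
qed

lemma F_nz: "(\<Prod>a\<leftarrow>xs. [:-a,1::complex:]) \<noteq> 0"
  by (auto simp: prod_list_zero_iff)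

lemma poly_F: "poly (\<Prod>a\<leftarrow>xs. [:-a,1::complex:]) z = 0 \<longleftrightarrow> z \<in> set xs"
  by (induction xs) auto

lemma root_change:
  fixes T :: "complex poly \<Rightarrow> complex poly"
  assumes lin: "linear_on_Cn n T"
    and hyp: "\<forall>f. f \<in> poly_pi_n n \<Omega>1 \<and> degree f = n \<longrightarrow> T f \<in> poly_pi \<Omega>2"
    and bnd: "bounded \<Omega>2" and pc: "path_connected \<Omega>1"
    and q: "q \<noteq> 0" "degree q + 1 = n" "\<forall>z. poly q z = 0 \<longrightarrow> z \<in> \<Omega>1"
    and xy: "x \<in> \<Omega>1" "y \<in> \<Omega>1"
  shows "degree (T ([:-x,1:] * q)) = degree (T ([:-y,1:] * q))"
proof (cases "x = y")
  case True then show ?thesis by simp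
next
  case False
  have perf: "\<forall>a\<in>\<Omega>1. \<forall>e>0. \<exists>w\<in>\<Omega>1. w \<noteq> a \<and> norm (w - a) < e"
  proof (intro ballI allI impI)
    fix a e assume a: "a \<in> \<Omega>1" and e: "(e::real) > 0"
    have "\<And>z. \<Omega>1 \<noteq> {z}" using False xy by auto
    then have "a islimpt \<Omega>1"
      using connected_imp_perfect[OF path_connected_imp_connected[OF pc] a] by blast
    then show "\<exists>w\<in>\<Omega>1. w \<noteq> a \<and> norm (w - a) < e"
      using e by (auto simp: islimpt_approachable dist_norm)
  qed
  define A where "A = T (pCons 0 q)"
  define B where "B = T q"
  have dq: "degree q \<le> n" using q by simp
  have dpc: "degree (pCons 0 q) \<le> n" using q by simp
  have eqT: "T ([:-w,1:] * q) = A - smult w B" for w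
  proof -
    have "[:-w,1:] * q = pCons 0 q + smult (-w) q" by (simp add: mult_pCons_left)
    then have "T ([:-w,1:] * q) = T (pCons 0 q) + T (smult (-w) q)"
      using lin dpc dq unfolding linear_on_Cn_def by (metis degree_smult_le le_trans)
    also have "T (smult (-w) q) = smult (-w) B"
      using lin dq unfolding linear_on_Cn_def B_def by blast
    then have "T (pCons 0 q) + T (smult (-w) q) = A - smult w B"
      unfolding A_def by simp
    finally show ?thesis .
  qed
  have inpi: "\<forall>w\<in>\<Omega>1. A - smult w B \<in> poly_pi \<Omega>2"
  proof
    fix w assume w: "w \<in> \<Omega>1"
    have nz: "[:-w,1:] * q \<noteq> 0" using q(1) by (metis mult_eq_0_iff pCons_eq_0_iff one_neq_zero)
    have dg: "degree ([:-w,1:] * q) = n" using q by (subst degree_mult_eq) auto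
    have "\<forall>z. poly ([:-w,1:] * q) z = 0 \<longrightarrow> z \<in> \<Omega>1" using q w by auto
    then have "[:-w,1:] * q \<in> poly_pi_n n \<Omega>1"
      using nz dg unfolding poly_pi_n_def poly_pi_def by auto
    then show "A - smult w B \<in> poly_pi \<Omega>2" using hyp dg eqT by metis
  qed
  show ?thesis
    unfolding eqT using keyK[OF inpi bnd perf] xy by simp
qed

lemma list_change:
  fixes T :: "complex poly \<Rightarrow> complex poly"
  assumes lin: "linear_on_Cn n T"
    and hyp: "\<forall>f. f \<in> poly_pi_n n \<Omega>1 \<and> degree f = n \<longrightarrow> T f \<in> poly_pi \<Omega>2"
    and bnd: "bounded \<Omega>2" and pc: "path_connected \<Omega>1"
  shows "\<forall>zs ys. length ys = length xs \<longrightarrow> set zs \<subseteq> \<Omega>1 \<longrightarrow> set xs \<subseteq> \<Omega>1 \<longrightarrow> set ys \<subseteq> \<Omega>1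
     \<longrightarrow> length zs + length xs = n \<longrightarrow>
     degree (T (\<Prod>a\<leftarrow>zs@xs. [:-a,1:])) = degree (T (\<Prod>a\<leftarrow>zs@ys. [:-a,1:]))"
proof (induction xs)
  case Nil
  then show ?case by simp
next
  case (Cons x xs)
  show ?case
  proof (intro allI impI)
    fix zs ys
    assume h: "length ys = length (x # xs)" "set zs \<subseteq> \<Omega>1" "set (x # xs) \<subseteq> \<Omega>1"
      "set ys \<subseteq> \<Omega>1" "length zs + length (x # xs) = n"
    obtain y ys' where ys: "ys = y # ys'" using h(1) by (cases ys) auto
    define q where "q = (\<Prod>a\<leftarrow>zs@xs. [:-a,1::complex:])"
    have q: "q \<noteq> 0" "degree q + 1 = n" "\<forall>z. poly q z = 0 \<longrightarrow> z \<in> \<Omega>1"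
    proof -
      have "degree q = length (zs@xs)" unfolding q_def by (rule degree_F)
      then show "q \<noteq> 0" "degree q + 1 = n" "\<forall>z. poly q z = 0 \<longrightarrow> z \<in> \<Omega>1"
        unfolding q_def using F_nz poly_F h by auto
    qed
    have e1: "(\<Prod>a\<leftarrow>zs@x#xs. [:-a,1:]) = [:-x,1:] * q" for x
      unfolding q_def by (simp only: map_append prod_list.append list.map prod_list.Cons mult.left_commute)
    have "degree (T (\<Prod>a\<leftarrow>zs@x#xs. [:-a,1:])) = degree (T (\<Prod>a\<leftarrow>(zs@[y])@xs. [:-a,1:]))"
      using root_change[OF lin hyp bnd pc q, of x y] h ys unfolding e1
      by (simp add: e1[of y, simplified])
    also have "\<dots> = degree (T (\<Prod>a\<leftarrow>(zs@[y])@ys'. [:-a,1:]))"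
      using h ys by (intro Cons.IH[rule_format]) auto
    finally show "degree (T (\<Prod>a\<leftarrow>zs@x#xs. [:-a,1:])) = degree (T (\<Prod>a\<leftarrow>zs@ys. [:-a,1:]))"
      using ys by (simp only: append_assoc append_Cons append_Nil)
  qed
qed

lemma factor_list:
  fixes f :: "complex poly"
  assumes "f \<in> poly_pi_n n \<Omega>1" "degree f = n"
  obtains xs where "f = smult (lead_coeff f) (\<Prod>a\<leftarrow>xs. [:-a,1:])" "length xs = n" "set xs \<subseteq> \<Omega>1"
proof -
  obtain xs where xs: "mset xs = proots f" using ex_mset by blast
  have f0: "f \<noteq> 0" using assms unfolding poly_pi_n_def poly_pi_def by auto
  have q: "f = smult (lead_coeff f) (\<Prod>a\<leftarrow>xs. [:-a,1:])"
    using complex_poly_decompose_multiset[of f] xs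
    by (metis prod_mset_prod_list mset_map)
  have len: "length xs = n" using xs size_proots_complex[of f] assms(2)
    by (metis size_mset)
  have "set xs \<subseteq> \<Omega>1" using xs assms f0 unfolding poly_pi_n_def poly_pi_def
    by (metis (mono_tags, lifting) mem_Collect_eq set_count_proots set_mset_mset subsetI)
  then show ?thesis using that q len by blast
qed

theorem mainTheorem19:
  fixes \<Omega>1 \<Omega>2 :: "complex set" and n :: nat and T :: "complex poly \<Rightarrow> complex poly"
  assumes "path_connected \<Omega>1"
    and "bounded \<Omega>2"
    and "linear_on_Cn n T"
    and "\<forall>f. f \<in> poly_pi_n n \<Omega>1 \<and> degree f = n \<longrightarrow> T f \<in> poly_pi \<Omega>2"
  shows "\<forall>f g. f \<in> poly_pi_n n \<Omega>1 \<and> degree f = n \<and> g \<in> poly_pi_n n \<Omega>1 \<and> degree g = n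
           \<longrightarrow> degree (T f) = degree (T g)"
proof (intro allI impI)
  fix f g assume h: "f \<in> poly_pi_n n \<Omega>1 \<and> degree f = n \<and> g \<in> poly_pi_n n \<Omega>1 \<and> degree g = n"
  obtain xs where xs: "f = smult (lead_coeff f) (\<Prod>a\<leftarrow>xs. [:-a,1:])" "length xs = n" "set xs \<subseteq> \<Omega>1"
    using factor_list h by blast
  obtain ys where ys: "g = smult (lead_coeff g) (\<Prod>a\<leftarrow>ys. [:-a,1:])" "length ys = n" "set ys \<subseteq> \<Omega>1"
    using factor_list h by blast
  have f0: "f \<noteq> 0" "g \<noteq> 0" using h unfolding poly_pi_n_def poly_pi_def by auto
  have "T f = smult (lead_coeff f) (T (\<Prod>a\<leftarrow>xs. [:-a,1:]))"
    using assms(3) xs degree_F unfolding linear_on_Cn_def by (metis order_refl)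
  then have df: "degree (T f) = degree (T (\<Prod>a\<leftarrow>xs. [:-a,1:]))" using f0 by simp
  have "T g = smult (lead_coeff g) (T (\<Prod>a\<leftarrow>ys. [:-a,1:]))"
    using assms(3) ys degree_F unfolding linear_on_Cn_def by (metis order_refl)
  then have dg: "degree (T g) = degree (T (\<Prod>a\<leftarrow>ys. [:-a,1:]))" using f0 by simp
  show "degree (T f) = degree (T g)"
    using list_change[OF assms(3,4,2,1), of xs] xs ys df dg
    by (metis append_Nil list.size(3) plus_nat.add_0 empty_subsetI set_empty)
qed
end
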